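(* Let $I\subseteq\mathbb R$ be a closed bounded interval, let $n$ be a positive integer, and let $W\ge 0$, $D>0$. Let $\mathcal U$ be the set of functions $f$ assigning to each $\alpha\in I$ an interval $f(\alpha)=[\underline f(\alpha),\overline f(\alpha)]$ of length $W/n$ such that $\lvert\underline f(\alpha_0)-\underline f(\alpha_1)\rvert\le \tfrac12 D\lvert\alpha_0-\alpha_1\rvert$ for all $\alpha_0,\alpha_1\in I$. Suppose $f_1,\dots,f_n,g_1,\dots,g_n\in\mathcal U$ satisfy, for all $i,j\in\{1,\dots,n\}$, $$\underline{g_j}(\min I)-\overline{f_i}(\min I)\ge W,\qquad \underline{f_i}(\max I)-\overline{g_j}(\max I)\ge W.$$ For $f\in\mathcal U$ let $R_f:=\{(\alpha,v)\in I\times\mathbb R : v\in f(\alpha)\}$. Then $$\bigl\lvert R_{f_1}\cup\dots\cup R_{f_n}\cup R_{g_1}\cup\dots\cup R_{g_n}\bigr\rvert \le 2W\lvert I\rvert-\frac{W^2}{D},$$ where the left side is two-dimensional Lebesgue measure and $\lvert I\rvert$ is the length of $I$. *)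

theory Defs
  imports "HOL-Analysis.Analysis"
begin

text \<open>An element f of the class U is represented by its lower endpoint function
  fl; the interval is f(alpha) = [fl alpha, fl alpha + W/n].\<close>

definition in_U :: "real \<Rightarrow> real \<Rightarrow> nat \<Rightarrow> real \<Rightarrow> real \<Rightarrow> (real \<Rightarrow> real) \<Rightarrow> bool" where
  "in_U a b n W D fl \<longleftrightarrow>
     (\<forall>\<alpha>0\<in>{a..b}. \<forall>\<alpha>1\<in>{a..b}. \<bar>fl \<alpha>0 - fl \<alpha>1\<bar> \<le> D / 2 * \<bar>\<alpha>0 - \<alpha>1\<bar>)"

definition region :: "real \<Rightarrow> real \<Rightarrow> nat \<Rightarrow> real \<Rightarrow> (real \<Rightarrow> real) \<Rightarrow> (real \<times> real) set" where
  "region a b n W fl = {(\<alpha>, v). \<alpha> \<in> {a..b} \<and> fl \<alpha> \<le> v \<and> v \<le> fl \<alpha> + W / real n}"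

end

theory Submission
  imports Defs
begin


definition pval :: "(nat \<Rightarrow> real) \<Rightarrow> real \<Rightarrow> nat \<Rightarrow> nat set \<Rightarrow> real" where
  "pval x l k S = Max (x ` S) - (real (card S) - real k) * l"

definition push :: "(nat \<Rightarrow> real) \<Rightarrow> nat \<Rightarrow> real \<Rightarrow> nat \<Rightarrow> real" where
  "push x n l k = Min (pval x l k ` {S. S \<subseteq> {1..n} \<and> k \<le> card S})"

lemma push_fin: "finite {S. S \<subseteq> {1..(n::nat)} \<and> k \<le> card S}"
  by (rule finite_subset[of _ "Pow {1..n}"]) auto

lemma push_le:
  assumes "S \<subseteq> {1..n}" "k \<le> card S"
  shows "push x n l k \<le> pval x l k S"
  unfolding push_def using assms push_fin by (intro Min_le) auto

lemma push_att:
  assumes "k \<le> n"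
  obtains S where "S \<subseteq> {1..n}" "k \<le> card S" "push x n l k = pval x l k S"
proof -
  have ne: "{S. S \<subseteq> {1..n} \<and> k \<le> card S} \<noteq> {}" using assms
    by (intro ex_in_conv[THEN iffD1]) (rule exI[of _ "{1..n}"], auto)
  have "push x n l k \<in> pval x l k ` {S. S \<subseteq> {1..n} \<and> k \<le> card S}"
    unfolding push_def using push_fin ne by (intro Min_in) auto
  then show ?thesis using that by auto
qed

lemma pval_shift: "pval x l k' S = pval x l k S + (real k' - real k) * l"
  unfolding pval_def by (simp add: algebra_simps)

lemma push_sep:
  assumes "k < k'" "k' \<le> n" "l \<ge> 0"
  shows "push x n l k + l \<le> push x n l k'"
proof -
  obtain S where S: "S \<subseteq> {1..n}" "k' \<le> card S" "push x n l k' = pval x l k' S"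
    using push_att[OF assms(2)] by blast
  have "push x n l k \<le> pval x l k S" using S assms by (intro push_le) auto
  moreover have "(real k' - real k) * l \<ge> 1 * l"
    using assms by (intro mult_right_mono) auto
  ultimately show ?thesis using S pval_shift[of x l k' S k] by linarith
qed

lemma card_sub_n: "S \<subseteq> {1..(n::nat)} \<Longrightarrow> card S \<le> n"
  using card_mono[of "{1..n}" S] by auto

lemma push_cover:
  assumes i: "i \<in> {1..n}" and v: "x i \<le> v" "v \<le> x i + l" and l: "l \<ge> 0"
  shows "\<exists>k\<in>{1..n}. push x n l k \<le> v \<and> v \<le> push x n l k + l"
proof -
  define K where "K = {k\<in>{1..n}. push x n l k \<le> v}"
  have "push x n l 1 \<le> pval x l 1 {i}" using i by (intro push_le) auto
  also have "pval x l 1 {i} = x i" by (simp add: pval_def)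
  finally have "1 \<in> K" using i v unfolding K_def by auto
  have finK: "finite K" unfolding K_def by auto
  define k where "k = Max K"
  have kK: "k \<in> K" unfolding k_def using finK \<open>1 \<in> K\<close> by (intro Max_in) auto
  have kmax: "\<And>k'. k' \<in> K \<Longrightarrow> k' \<le> k" unfolding k_def using finK by auto
  have k1: "k \<in> {1..n}" "push x n l k \<le> v" using kK unfolding K_def by auto
  show ?thesis
  proof (rule ccontr)
    assume "\<not> ?thesis"
    then have "\<not> (v \<le> push x n l k + l)" using k1 by blast
    then have less: "push x n l k + l < v" by linarith
    obtain S where S: "S \<subseteq> {1..n}" "k \<le> card S" "push x n l k = pval x l k S"
      using push_att[of k n x l] k1 by auto
    have finS: "finite S" using S(1) finite_subset by blast
    have Sne: "S \<noteq> {}" using S(2) k1 by (intro notI) simp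
    have "\<exists>S'. S' \<subseteq> {1..n} \<and> k+1 \<le> card S' \<and> pval x l (k+1) S' \<le> v"
    proof (cases "i \<in> S")
      case True
      show ?thesis
      proof (cases "card S = k")
        case True
        have "x i \<le> Max (x ` S)" using \<open>i \<in> S\<close> finS by auto
        then have "x i \<le> push x n l k" using S True by (simp add: pval_def)
        then show ?thesis using less v by linarith
      next
        case False
        then have "k + 1 \<le> card S" using S(2) by auto
        moreover have "pval x l (k+1) S = push x n l k + l"
          using S(3) pval_shift[of x l "k+1" S k] by simp
        ultimately show ?thesis using S(1) less by (intro exI[of _ S]) auto
      qed
    next
      case False
      have c: "card (insert i S) = card S + 1" using False finS by simp
      have M: "Max (x ` insert i S) = max (x i) (Max (x ` S))"
        using finS Sne by (simp add: Max_insert)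
      have "pval x l (k+1) (insert i S) = max (x i) (Max (x ` S)) - (real (card S) - real k) * l"
        unfolding pval_def M c by simp
      also have "\<dots> \<le> v"
      proof -
        have "(real (card S) - real k) * l \<ge> 0" using S(2) l by simp
        moreover have "Max (x ` S) - (real (card S) - real k) * l = push x n l k"
          using S(3) by (simp add: pval_def)
        ultimately show ?thesis using less v l by (simp add: max_def)
      qed
      finally show ?thesis using S(1,2) i c by (intro exI[of _ "insert i S"]) auto
    qed
    then obtain S' where S': "S' \<subseteq> {1..n}" "k+1 \<le> card S'" "pval x l (k+1) S' \<le> v" by blast
    have "card S' \<le> n" using S'(1) by (rule card_sub_n)
    then have "k + 1 \<le> n" using S'(2) by linarith
    moreover have "push x n l (k+1) \<le> v" using push_le[OF S'(1,2), of x l] S'(3) by linarith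
    ultimately have "k+1 \<in> K" unfolding K_def by auto
    then have "k + 1 \<le> k" by (rule kmax)
    then show False by simp
  qed
qed

lemma push_upper:
  assumes "1 \<le> k" "k \<le> n" "\<And>i. i \<in> {1..n} \<Longrightarrow> x i \<le> c" "l \<ge> 0"
  shows "push x n l k \<le> c"
proof -
  have "push x n l k \<le> pval x l k {1..n}" using assms by (intro push_le) auto
  also have "\<dots> \<le> Max (x ` {1..n})" using assms by (simp add: pval_def)
  also have "\<dots> \<le> c" using assms by (subst Max_le_iff) auto
  finally show ?thesis .
qed

lemma push_lower:
  assumes "1 \<le> k" "k \<le> n" "\<And>i. i \<in> {1..n} \<Longrightarrow> c \<le> x i" "l \<ge> 0"
  shows "c - (real n - 1) * l \<le> push x n l k"
proof -
  obtain S where S: "S \<subseteq> {1..n}" "k \<le> card S" "push x n l k = pval x l k S"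
    using push_att[of k n x l] assms by auto
  have finS: "finite S" using S(1) finite_subset by blast
  have Sne: "S \<noteq> {}" using S(2) assms by auto
  then obtain j where j: "j \<in> S" by auto
  have "c \<le> x j" using assms S j by auto
  also have "x j \<le> Max (x ` S)" using j finS by auto
  finally have 1: "c \<le> Max (x ` S)" .
  have "card S \<le> n" using S card_sub_n by auto
  then have "(real (card S) - real k) * l \<le> (real n - 1) * l"
    using assms by (intro mult_right_mono) auto
  then show ?thesis using 1 S(3) by (simp add: pval_def)
qed

lemma Max_img_le:
  assumes "finite S" "S \<noteq> {}" "\<And>i. i \<in> S \<Longrightarrow> (x::nat\<Rightarrow>real) i \<le> y i + d"
  shows "Max (x ` S) \<le> Max (y ` S) + d"
proof -
  have "Max (x ` S) \<in> x ` S" using assms by (intro Max_in) auto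
  then obtain i where i: "i \<in> S" "Max (x ` S) = x i" by auto
  have "y i \<le> Max (y ` S)" using i assms by auto
  then show ?thesis using i assms(3)[of i] by linarith
qed

lemma push_lip1:
  assumes "1 \<le> k" "k \<le> n" "\<And>i. i \<in> {1..n} \<Longrightarrow> x i \<le> y i + d"
  shows "push x n l k \<le> push y n l k + d"
proof -
  obtain S where S: "S \<subseteq> {1..n}" "k \<le> card S" "push y n l k = pval y l k S"
    using push_att[of k n y l] assms by auto
  have finS: "finite S" using S(1) finite_subset by blast
  have Sne: "S \<noteq> {}" using S(2) assms by auto
  have "push x n l k \<le> pval x l k S" using S by (intro push_le)
  also have "\<dots> \<le> pval y l k S + d" unfolding pval_def
    using Max_img_le[OF finS Sne, of x y d] assms(3) S(1) by (auto simp: subset_iff)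
  finally show ?thesis using S(3) by simp
qed

lemma push_lip:
  assumes "1 \<le> k" "k \<le> n" "\<And>i. i \<in> {1..n} \<Longrightarrow> \<bar>x i - y i\<bar> \<le> d"
  shows "\<bar>push x n l k - push y n l k\<bar> \<le> d"
proof -
  have "push x n l k \<le> push y n l k + d" using assms(1,2) by (rule push_lip1) (use assms(3) in \<open>fastforce simp: abs_le_iff\<close>)
  moreover have "push y n l k \<le> push x n l k + d" using assms(1,2) by (rule push_lip1) (use assms(3) in \<open>fastforce simp: abs_le_iff\<close>)
  ultimately show ?thesis by linarith
qed



lemma Ioo_fmeas: "{u<..<(w::real)} \<in> fmeasurable lborel"
  by (metis box_real(1) fmeasurable_box)

lemma Ioo_measure: "measure lborel {u<..<(w::real)} = max 0 (w - u)"
  by (cases "u \<le> w") auto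

lemma slice_bound:
  fixes y z :: "nat \<Rightarrow> real"
  assumes l: "l \<ge> 0"
    and sy: "\<And>k k'. 1 \<le> k \<Longrightarrow> k < k' \<Longrightarrow> k' \<le> n \<Longrightarrow> y k + l \<le> y k'"
    and sz: "\<And>k k'. 1 \<le> k \<Longrightarrow> k < k' \<Longrightarrow> k' \<le> n \<Longrightarrow> z k + l \<le> z k'"
  shows "measure lborel ((\<Union>k\<in>{1..n}. {y k..y k + l}) \<union> (\<Union>m\<in>{1..n}. {z m..z m + l}))
     \<le> 2 * real n * l - (\<Sum>k\<in>{1..n}. \<Sum>m\<in>{1..n}. max 0 (l - \<bar>y k - z m\<bar>))"
proof -
  define A where "A = (\<Union>k\<in>{1..n}. {y k..y k + l})"
  define B where "B = (\<Union>m\<in>{1..n}. {z m..z m + l})"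
  define Ov where "Ov = (\<lambda>p. {max (y (fst p)) (z (snd p)) <..< min (y (fst p) + l) (z (snd p) + l)})"
  have cA: "compact A" unfolding A_def by (intro compact_UN) auto
  have cB: "compact B" unfolding B_def by (intro compact_UN) auto
  have fA: "A \<in> fmeasurable lborel" using cA by (rule fmeasurable_compact)
  have fB: "B \<in> fmeasurable lborel" using cB by (rule fmeasurable_compact)
  have fAB: "A \<inter> B \<in> fmeasurable lborel" using cA cB by (intro fmeasurable_compact compact_Int) auto
  have mA: "measure lborel A \<le> real n * l"
  proof -
    have "measure lborel A \<le> (\<Sum>k\<in>{1..n}. measure lborel {y k..y k + l})"
      unfolding A_def by (intro measure_UNION_le) auto
    also have "\<dots> = real n * l" using l by simp
    finally show ?thesis .
  qed
  have mB: "measure lborel B \<le> real n * l"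
  proof -
    have "measure lborel B \<le> (\<Sum>k\<in>{1..n}. measure lborel {z k..z k + l})"
      unfolding B_def by (intro measure_UNION_le) auto
    also have "\<dots> = real n * l" using l by simp
    finally show ?thesis .
  qed
  have sub: "(\<Union>p\<in>{1..n}\<times>{1..n}. Ov p) \<subseteq> A \<inter> B"
    unfolding Ov_def A_def B_def by force
  have disj: "pairwise (\<lambda>p q. disjnt (Ov p) (Ov q)) ({1..n}\<times>{1..n})"
  proof (intro pairwiseI)
    fix p q assume p: "p \<in> {1..n}\<times>{1..n}" and q: "q \<in> {1..n}\<times>{1..n}" and pq: "p \<noteq> q"
    obtain k m k' m' where pk: "p = (k,m)" and qk: "q = (k',m')" by (cases p, cases q) auto
    have yy: "{y k<..<y k + l} \<inter> {y k'<..<y k' + l} = {}" if "k \<noteq> k'"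
    proof (cases "k < k'")
      case True
      then have "y k + l \<le> y k'" using sy p q pk qk by auto
      then show ?thesis by auto
    next
      case False
      then have "y k' + l \<le> y k" using sy p q pk qk that by auto
      then show ?thesis by auto
    qed
    have zz: "{z m<..<z m + l} \<inter> {z m'<..<z m' + l} = {}" if "m \<noteq> m'"
    proof (cases "m < m'")
      case True
      then have "z m + l \<le> z m'" using sz p q pk qk by auto
      then show ?thesis by auto
    next
      case False
      then have "z m' + l \<le> z m" using sz p q pk qk that by auto
      then show ?thesis by auto
    qed
    have "Ov p \<subseteq> {y k<..<y k + l} \<inter> {z m<..<z m + l}" unfolding Ov_def pk by auto
    moreover have "Ov q \<subseteq> {y k'<..<y k' + l} \<inter> {z m'<..<z m' + l}" unfolding Ov_def qk by auto
    moreover have "k \<noteq> k' \<or> m \<noteq> m'" using pq pk qk by auto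
    ultimately show "disjnt (Ov p) (Ov q)" using yy zz unfolding disjnt_def by blast
  qed
  have mO: "measure lborel (\<Union>p\<in>{1..n}\<times>{1..n}. Ov p) = (\<Sum>p\<in>{1..n}\<times>{1..n}. measure lborel (Ov p))"
    using disj by (intro measure_UNION') (auto simp: Ov_def Ioo_fmeas)
  also have "\<dots> = (\<Sum>p\<in>{1..n}\<times>{1..n}. max 0 (l - \<bar>y (fst p) - z (snd p)\<bar>))"
  proof (intro sum.cong refl)
    fix p
    show "measure lborel (Ov p) = max 0 (l - \<bar>y (fst p) - z (snd p)\<bar>)"
      unfolding Ov_def Ioo_measure by (simp add: max_def min_def abs_if)
  qed
  also have "\<dots> = (\<Sum>k\<in>{1..n}. \<Sum>m\<in>{1..n}. max 0 (l - \<bar>y k - z m\<bar>))"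
    by (simp add: sum.cartesian_product case_prod_beta)
  finally have mO': "measure lborel (\<Union>p\<in>{1..n}\<times>{1..n}. Ov p) = (\<Sum>k\<in>{1..n}. \<Sum>m\<in>{1..n}. max 0 (l - \<bar>y k - z m\<bar>))" .
  have "measure lborel (\<Union>p\<in>{1..n}\<times>{1..n}. Ov p) \<le> measure lborel (A \<inter> B)"
    using sub fAB by (intro measure_mono_fmeasurable) (auto simp: Ov_def)
  moreover have "measure lborel (A \<union> B) = measure lborel A + measure lborel B - measure lborel (A \<inter> B)"
    using fA fB by (rule measure_Un3)
  ultimately show ?thesis using mA mB mO' unfolding A_def[symmetric] B_def[symmetric] by linarith
qed



lemma tent_half1:
  fixes l D c r :: real
  assumes "r \<ge> 0"
  shows "((\<lambda>x. l - D * (c - x)) has_integral (l * r - D * r^2 / 2)) {c - r..c}"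
proof -
  have "((\<lambda>x. l - D * (c - x)) has_integral ((l * c + D * (c - c)^2/2) - (l * (c - r) + D * (c - (c - r))^2/2))) {c - r..c}"
    using assms
    by (intro fundamental_theorem_of_calculus)
       (auto intro!: derivative_eq_intros simp: has_real_derivative_iff_has_vector_derivative[symmetric] field_simps power2_eq_square)
  then show ?thesis by (simp add: algebra_simps power2_eq_square)
qed

lemma tent_half2:
  fixes l D c r :: real
  assumes "r \<ge> 0"
  shows "((\<lambda>x. l - D * (x - c)) has_integral (l * r - D * r^2 / 2)) {c..c + r}"
proof -
  have "((\<lambda>x. l - D * (x - c)) has_integral ((l * (c + r) - D * ((c + r) - c)^2/2) - (l * c - D * (c - c)^2/2))) {c..c + r}"
    using assms
    by (intro fundamental_theorem_of_calculus)
       (auto intro!: derivative_eq_intros simp: has_real_derivative_iff_has_vector_derivative[symmetric] field_simps power2_eq_square)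
  then show ?thesis by (simp add: algebra_simps power2_eq_square)
qed

lemma cross_integral:
  fixes h :: "real \<Rightarrow> real"
  assumes ab: "a \<le> b" and D: "D > 0" and l: "l \<ge> 0"
    and lip: "\<And>x y. x \<in> {a..b} \<Longrightarrow> y \<in> {a..b} \<Longrightarrow> \<bar>h x - h y\<bar> \<le> D * \<bar>x - y\<bar>"
    and ha: "h a \<ge> l" and hb: "h b \<le> - l"
  shows "(\<lambda>x. max 0 (l - \<bar>h x\<bar>)) integrable_on {a..b}"
    and "integral {a..b} (\<lambda>x. max 0 (l - \<bar>h x\<bar>)) \<ge> l^2 / D"
proof -
  define F where "F = (\<lambda>x. max 0 (l - \<bar>h x\<bar>))"
  have "D-lipschitz_on {a..b} h"
    using D lip by (intro lipschitz_onI) (auto simp: dist_real_def)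
  then have ch: "continuous_on {a..b} h" by (rule lipschitz_on_continuous_on)
  have cF: "continuous_on {a..b} F" unfolding F_def
    by (intro continuous_intros ch)
  then have iF: "F integrable_on {a..b}" by (rule integrable_continuous_interval)
  then show "(\<lambda>x. max 0 (l - \<bar>h x\<bar>)) integrable_on {a..b}" by (simp add: F_def)
  have "\<exists>x. a \<le> x \<and> x \<le> b \<and> (\<lambda>x. - h x) x = 0"
    using ha hb l ab by (intro IVT') (auto intro!: continuous_intros ch)
  then obtain c where c: "a \<le> c" "c \<le> b" "h c = 0" by auto
  define r where "r = l / D"
  have r0: "r \<ge> 0" using l D by (simp add: r_def)
  have Dr: "D * r = l" using D by (simp add: r_def)
  have "l \<le> \<bar>h a - h c\<bar>" using ha c l by simp
  also have "\<dots> \<le> D * \<bar>a - c\<bar>" using lip[of a c] c ab by auto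
  finally have "D * r \<le> D * (c - a)" using Dr c by simp
  then have ra: "a \<le> c - r" using D by simp
  have "l \<le> \<bar>h b - h c\<bar>" using hb c l by simp
  also have "\<dots> \<le> D * \<bar>b - c\<bar>" using lip[of b c] c ab by auto
  finally have "D * r \<le> D * (b - c)" using Dr c by simp
  then have rb: "c + r \<le> b" using D by simp
  have Fge: "l - D * \<bar>x - c\<bar> \<le> F x" if "x \<in> {a..b}" for x
  proof -
    have "\<bar>h x\<bar> = \<bar>h x - h c\<bar>" using c by simp
    also have "\<dots> \<le> D * \<bar>x - c\<bar>" using lip[of x c] that c by auto
    finally show ?thesis unfolding F_def by simp
  qed
  have F0: "\<forall>x\<in>{a..b}. 0 \<le> F x" unfolding F_def by simp
  have i1: "F integrable_on {c - r..c}" using iF ra c r0 by (intro integrable_subinterval_real[OF iF]) auto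
  have i2: "F integrable_on {c..c + r}" using iF rb c r0 by (intro integrable_subinterval_real[OF iF]) auto
  have i12: "F integrable_on {c - r..c + r}" using iF ra rb by (intro integrable_subinterval_real[OF iF]) auto
  have "l * r - D * r^2 / 2 \<le> integral {c - r..c} F"
  proof (rule has_integral_le[OF tent_half1[OF r0] integrable_integral[OF i1]])
    fix x assume x: "x \<in> {c - r..c}"
    then have "x \<in> {a..b}" using ra c by auto
    then have "l - D * \<bar>x - c\<bar> \<le> F x" by (rule Fge)
    then show "l - D * (c - x) \<le> F x" using x by (simp add: abs_if split: if_splits)
  qed
  moreover have "l * r - D * r^2 / 2 \<le> integral {c..c + r} F"
  proof (rule has_integral_le[OF tent_half2[OF r0] integrable_integral[OF i2]])
    fix x assume x: "x \<in> {c..c + r}"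
    then have "x \<in> {a..b}" using rb c by auto
    then have "l - D * \<bar>x - c\<bar> \<le> F x" by (rule Fge)
    then show "l - D * (x - c) \<le> F x" using x by (simp add: abs_if split: if_splits)
  qed
  moreover have "integral {c - r..c + r} F = integral {c - r..c} F + integral {c..c + r} F"
    using Henstock_Kurzweil_Integration.integral_combine[where a="c - r" and c=c and b="c + r" and f=F] r0 i12 by auto
  moreover have "integral {c - r..c + r} F \<le> integral {a..b} F"
    using ra rb r0 by (intro integral_subset_le i12 iF F0) auto
  moreover have "2 * (l * r - D * r^2 / 2) = l^2 / D"
    using D by (simp add: r_def power2_eq_square field_simps)
  ultimately have "l^2 / D \<le> integral {a..b} F"
    by (smt (verit))
  then show "integral {a..b} (\<lambda>x. max 0 (l - \<bar>h x\<bar>)) \<ge> l^2 / D"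
    unfolding F_def by simp
qed



lemma ends_lemma:
  fixes x u :: "nat \<Rightarrow> real"
  assumes n: "n \<ge> 1" and l: "l \<ge> 0" and W: "W = real n * l"
    and h: "\<And>i j. i \<in> {1..n} \<Longrightarrow> j \<in> {1..n} \<Longrightarrow> u j - (x i + l) \<ge> W"
    and k: "1 \<le> k" "k \<le> n" and m: "1 \<le> m" "m \<le> n"
  shows "push u n l m - push x n l k \<ge> l"
proof -
  define M where "M = Max (x ` {1..n})"
  have "M \<in> x ` {1..n}" unfolding M_def using n by (intro Max_in) auto
  then obtain i0 where i0: "i0 \<in> {1..n}" "x i0 = M" by auto
  have xM: "\<And>i. i \<in> {1..n} \<Longrightarrow> x i \<le> M" unfolding M_def by auto
  have 1: "push x n l k \<le> M" using k xM l by (intro push_upper) auto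
  have uM: "\<And>j. j \<in> {1..n} \<Longrightarrow> M + l + W \<le> u j" using h[OF i0(1)] i0(2) by fastforce
  have 2: "M + l + W - (real n - 1) * l \<le> push u n l m" using m uM l by (intro push_lower) auto
  have "M + l + W - (real n - 1) * l = M + 2 * l" using W by (simp add: algebra_simps)
  then show ?thesis using 1 2 l by linarith
qed

lemma lemma6_main:
  fixes a b W D :: real and n :: nat and f g :: "nat \<Rightarrow> real \<Rightarrow> real"
  assumes ab: "a \<le> b" and n1: "n \<ge> 1" and W0: "W \<ge> 0" and D0: "D > 0"
    and fU: "\<And>i. i \<in> {1..n} \<Longrightarrow> in_U a b n W D (f i)"
    and gU: "\<And>j. j \<in> {1..n} \<Longrightarrow> in_U a b n W D (g j)"
    and ha: "\<And>i j. i \<in> {1..n} \<Longrightarrow> j \<in> {1..n} \<Longrightarrow> g j a - (f i a + W / real n) \<ge> W"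
    and hb: "\<And>i j. i \<in> {1..n} \<Longrightarrow> j \<in> {1..n} \<Longrightarrow> f i b - (g j b + W / real n) \<ge> W"
  shows "measure lborel ((\<Union>i\<in>{1..n}. region a b n W (f i)) \<union> (\<Union>j\<in>{1..n}. region a b n W (g j)))
           \<le> 2 * W * (b - a) - W\<^sup>2 / D"
proof -
  define l where "l = W / real n"
  have l0: "l \<ge> 0" using W0 by (simp add: l_def)
  have Wl: "W = real n * l" using n1 by (simp add: l_def)
  define cl where "cl = (\<lambda>x::real. max a (min b x))"
  have clab: "cl x \<in> {a..b}" for x using ab by (auto simp: cl_def)
  have clid: "x \<in> {a..b} \<Longrightarrow> cl x = x" for x by (auto simp: cl_def)
  have cllip: "\<bar>cl x - cl y\<bar> \<le> \<bar>x - y\<bar>" for x y by (auto simp: cl_def max_def min_def abs_if)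
  define Y where "Y = (\<lambda>k x. push (\<lambda>i. f i (cl x)) n l k)"
  define Z where "Z = (\<lambda>k x. push (\<lambda>i. g i (cl x)) n l k)"
  have flip: "\<bar>f i (cl x) - f i (cl y)\<bar> \<le> D / 2 * \<bar>x - y\<bar>" if "i \<in> {1..n}" for i x y
  proof -
    have "\<bar>f i (cl x) - f i (cl y)\<bar> \<le> D / 2 * \<bar>cl x - cl y\<bar>"
      using fU[OF that] clab unfolding in_U_def by blast
    also have "\<dots> \<le> D / 2 * \<bar>x - y\<bar>" using cllip D0 by (intro mult_left_mono) auto
    finally show ?thesis .
  qed
  have glip: "\<bar>g i (cl x) - g i (cl y)\<bar> \<le> D / 2 * \<bar>x - y\<bar>" if "i \<in> {1..n}" for i x y
  proof -
    have "\<bar>g i (cl x) - g i (cl y)\<bar> \<le> D / 2 * \<bar>cl x - cl y\<bar>"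
      using gU[OF that] clab unfolding in_U_def by blast
    also have "\<dots> \<le> D / 2 * \<bar>x - y\<bar>" using cllip D0 by (intro mult_left_mono) auto
    finally show ?thesis .
  qed
  have Ylip: "\<bar>Y k x - Y k y\<bar> \<le> D / 2 * \<bar>x - y\<bar>" if "k \<in> {1..n}" for k x y
    unfolding Y_def using that flip by (intro push_lip) auto
  have Zlip: "\<bar>Z k x - Z k y\<bar> \<le> D / 2 * \<bar>x - y\<bar>" if "k \<in> {1..n}" for k x y
    unfolding Z_def using that glip by (intro push_lip) auto
  have Ycont: "continuous_on UNIV (Y k)" if "k \<in> {1..n}" for k
  proof -
    have "(D/2)-lipschitz_on UNIV (Y k)"
      using D0 Ylip[OF that] by (intro lipschitz_onI) (auto simp: dist_real_def)
    then show ?thesis by (rule lipschitz_on_continuous_on)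
  qed
  have Zcont: "continuous_on UNIV (Z k)" if "k \<in> {1..n}" for k
  proof -
    have "(D/2)-lipschitz_on UNIV (Z k)"
      using D0 Zlip[OF that] by (intro lipschitz_onI) (auto simp: dist_real_def)
    then show ?thesis by (rule lipschitz_on_continuous_on)
  qed
  have Ysep: "\<And>k k'. 1 \<le> k \<Longrightarrow> k < k' \<Longrightarrow> k' \<le> n \<Longrightarrow> Y k x + l \<le> Y k' x" for x
    unfolding Y_def using l0 by (intro push_sep) auto
  have Zsep: "\<And>k k'. 1 \<le> k \<Longrightarrow> k < k' \<Longrightarrow> k' \<le> n \<Longrightarrow> Z k x + l \<le> Z k' x" for x
    unfolding Z_def using l0 by (intro push_sep) auto
  define A where "A = (\<lambda>x. \<Union>k\<in>{1..n}. {Y k x..Y k x + l})"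
  define B where "B = (\<lambda>x. \<Union>k\<in>{1..n}. {Z k x..Z k x + l})"
  define T where "T = {p::real\<times>real. fst p \<in> {a..b} \<and> snd p \<in> A (fst p) \<union> B (fst p)}"
  define S where "S = (\<Union>i\<in>{1..n}. region a b n W (f i)) \<union> (\<Union>j\<in>{1..n}. region a b n W (g j))"
  have ST: "S \<subseteq> T"
  proof
    fix p assume "p \<in> S"
    then obtain x v where p: "p = (x, v)" by (cases p)
    show "p \<in> T"
    proof (cases "\<exists>i\<in>{1..n}. p \<in> region a b n W (f i)")
      case True
      then obtain i where i: "i \<in> {1..n}" "x \<in> {a..b}" "f i x \<le> v" "v \<le> f i x + l"
        unfolding p region_def l_def by auto
      have "\<exists>k\<in>{1..n}. Y k x \<le> v \<and> v \<le> Y k x + l"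
        unfolding Y_def using push_cover[of i n "\<lambda>i. f i (cl x)" v l] i clid l0 by auto
      then show ?thesis unfolding T_def A_def p using i by auto
    next
      case False
      then obtain i where i: "i \<in> {1..n}" "x \<in> {a..b}" "g i x \<le> v" "v \<le> g i x + l"
        using \<open>p \<in> S\<close> unfolding S_def p region_def l_def by auto
      have "\<exists>k\<in>{1..n}. Z k x \<le> v \<and> v \<le> Z k x + l"
        unfolding Z_def using push_cover[of i n "\<lambda>i. g i (cl x)" v l] i clid l0 by auto
      then show ?thesis unfolding T_def B_def p using i by auto
    qed
  qed
  have Teq: "T = ({p. a \<le> fst p} \<inter> {p. fst p \<le> b}) \<inter>
      ((\<Union>k\<in>{1..n}. {p. Y k (fst p) \<le> snd p} \<inter> {p. snd p \<le> Y k (fst p) + l}) \<union>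
       (\<Union>k\<in>{1..n}. {p. Z k (fst p) \<le> snd p} \<inter> {p. snd p \<le> Z k (fst p) + l}))"
    unfolding T_def A_def B_def by auto
  have "closed T"
    unfolding Teq
    by (intro closed_Int closed_Un closed_UN finite_atLeastAtMost ballI closed_Collect_le
        continuous_on_compose2[OF Ycont] continuous_on_compose2[OF Zcont] continuous_intros) auto
  then have Tsets: "T \<in> sets lborel" by (simp add: borel_closed)
  have emT: "emeasure lborel T = (\<integral>\<^sup>+x. emeasure lborel (Pair x -` T) \<partial>lborel)"
  proof -
    have "emeasure lborel T = emeasure (lborel \<Otimes>\<^sub>M lborel) T" by (simp add: lborel_prod)
    also have "\<dots> = (\<integral>\<^sup>+x. emeasure lborel (Pair x -` T) \<partial>lborel)"
      by (rule lborel.emeasure_pair_measure_alt) (unfold lborel_prod, rule Tsets)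
    finally show ?thesis .
  qed
  define \<phi> where "\<phi> = (\<lambda>x. 2 * W - (\<Sum>k\<in>{1..n}. \<Sum>m\<in>{1..n}. max 0 (l - \<bar>Y k x - Z m x\<bar>)))"
  have slb: "measure lborel (A x \<union> B x) \<le> \<phi> x" for x
  proof -
    have "measure lborel (A x \<union> B x) \<le> 2 * real n * l - (\<Sum>k\<in>{1..n}. \<Sum>m\<in>{1..n}. max 0 (l - \<bar>Y k x - Z m x\<bar>))"
      unfolding A_def B_def by (rule slice_bound[OF l0 Ysep Zsep])
    then show ?thesis unfolding \<phi>_def Wl by simp
  qed
  have phi0: "0 \<le> \<phi> x" for x using slb[of x] measure_nonneg[of lborel "A x \<union> B x"] by linarith
  have cAB: "compact (A x \<union> B x)" for x unfolding A_def B_def by (intro compact_Un compact_UN) auto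
  have sle: "emeasure lborel (Pair x -` T) \<le> indicator {a..b} x * ennreal (\<phi> x)" for x
  proof (cases "x \<in> {a..b}")
    case True
    then have "Pair x -` T = A x \<union> B x" unfolding T_def by auto
    then have "emeasure lborel (Pair x -` T) = ennreal (measure lborel (A x \<union> B x))"
      using fmeasurable_compact[OF cAB[of x]] by (simp add: emeasure_eq_measure2)
    also have "\<dots> \<le> ennreal (\<phi> x)" using slb by (rule ennreal_leI)
    finally show ?thesis using True by simp
  next
    case False
    then have "Pair x -` T = {}" unfolding T_def by auto
    then show ?thesis by simp
  qed
  define J where "J = (\<lambda>k m. integral {a..b} (\<lambda>x. max 0 (l - \<bar>Z m x - Y k x\<bar>)))"
  have hlip: "\<bar>(Z m x - Y k x) - (Z m y - Y k y)\<bar> \<le> D * \<bar>x - y\<bar>" if "k \<in> {1..n}" "m \<in> {1..n}" for k m x y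
    using Ylip[OF that(1), of x y] Zlip[OF that(2), of x y] by linarith
  have Ya: "Y k a = push (\<lambda>i. f i a) n l k" for k unfolding Y_def using clid[of a] ab by simp
  have Za: "Z k a = push (\<lambda>i. g i a) n l k" for k unfolding Z_def using clid[of a] ab by simp
  have Yb: "Y k b = push (\<lambda>i. f i b) n l k" for k unfolding Y_def using clid[of b] ab by simp
  have Zb: "Z k b = push (\<lambda>i. g i b) n l k" for k unfolding Z_def using clid[of b] ab by simp
  have crossed: "(\<lambda>x. max 0 (l - \<bar>Z m x - Y k x\<bar>)) integrable_on {a..b} \<and> l^2 / D \<le> J k m"
    if km: "k \<in> {1..n}" "m \<in> {1..n}" for k m
  proof -
    have e1: "Z m a - Y k a \<ge> l" unfolding Ya Za
      using km ha by (intro ends_lemma[OF n1 l0 Wl]) (auto simp: l_def)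
    have e2: "Y k b - Z m b \<ge> l" unfolding Yb Zb
      using km hb by (intro ends_lemma[OF n1 l0 Wl]) (auto simp: l_def)
    show ?thesis
      using cross_integral[OF ab D0 l0, of "\<lambda>x. Z m x - Y k x"] hlip[OF km] e1 e2
      unfolding J_def by auto
  qed
  have phiint: "(\<phi> has_integral (2 * W * (b - a) - (\<Sum>k\<in>{1..n}. \<Sum>m\<in>{1..n}. J k m))) {a..b}"
  proof -
    have "((\<lambda>x. (\<Sum>k\<in>{1..n}. \<Sum>m\<in>{1..n}. max 0 (l - \<bar>Y k x - Z m x\<bar>))) has_integral (\<Sum>k\<in>{1..n}. \<Sum>m\<in>{1..n}. J k m)) {a..b}"
    proof (intro has_integral_sum finite_atLeastAtMost)
      fix k m assume "k \<in> {1..n}" "m \<in> {1..n}"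
      then have "(\<lambda>x. max 0 (l - \<bar>Z m x - Y k x\<bar>)) integrable_on {a..b}" using crossed by blast
      then show "((\<lambda>x. max 0 (l - \<bar>Y k x - Z m x\<bar>)) has_integral J k m) {a..b}"
        unfolding J_def by (simp add: abs_minus_commute integrable_integral)
    qed
    moreover have "((\<lambda>x. 2 * W) has_integral (2 * W * (b - a))) {a..b}"
      using has_integral_const_real[of "2 * W" a b] ab by (simp add: mult.commute)
    ultimately show ?thesis unfolding \<phi>_def by (rule has_integral_diff[rotated])
  qed
  have Jsum: "W^2 / D \<le> (\<Sum>k\<in>{1..n}. \<Sum>m\<in>{1..n}. J k m)"
  proof -
    have "(\<Sum>k\<in>{1..n}. \<Sum>m\<in>{1..n}. l^2 / D) \<le> (\<Sum>k\<in>{1..n}. \<Sum>m\<in>{1..n}. J k m)"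
      using crossed by (intro sum_mono) blast
    moreover have "(\<Sum>k\<in>{1..n}. \<Sum>m\<in>{1..n}. l^2 / D) = real n * (real n * (l^2 / D))"
      by simp
    moreover have "W^2 / D = real n * (real n * (l^2 / D))"
      using Wl by (simp add: power2_eq_square)
    ultimately show ?thesis by linarith
  qed
  define I where "I = 2 * W * (b - a) - (\<Sum>k\<in>{1..n}. \<Sum>m\<in>{1..n}. J k m)"
  have nnI: "(\<integral>\<^sup>+x. indicator {a..b} x * ennreal (\<phi> x) \<partial>lborel) = ennreal I"
  proof -
    have "(\<integral>\<^sup>+x. indicator {a..b} x * ennreal (\<phi> x) \<partial>lborel) = (\<integral>\<^sup>+x. ennreal (indicator {a..b} x * \<phi> x) \<partial>lborel)"
      by (intro nn_integral_cong) (simp split: split_indicator)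
    then show ?thesis
      unfolding I_def using nn_integral_has_integral_lebesgue[OF _ phiint] phi0 by simp
  qed
  have I0: "0 \<le> I" unfolding I_def using has_integral_nonneg[OF phiint] phi0 by simp
  have "emeasure lborel S \<le> emeasure lborel T" using ST Tsets by (rule emeasure_mono)
  also have "\<dots> \<le> (\<integral>\<^sup>+x. indicator {a..b} x * ennreal (\<phi> x) \<partial>lborel)"
    unfolding emT by (intro nn_integral_mono sle)
  also have "\<dots> = ennreal I" by (rule nnI)
  finally have "measure lborel S \<le> I" unfolding measure_def using I0 by (intro enn2real_leI)
  then show ?thesis unfolding S_def I_def using Jsum by linarith
qed

theorem lemma6:
  fixes a b W D :: real and n :: nat and f g :: "nat \<Rightarrow> real \<Rightarrow> real"
  assumes "a \<le> b" and "n \<ge> 1" and "W \<ge> 0" and "D > 0"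
    and "\<And>i. i \<in> {1..n} \<Longrightarrow> in_U a b n W D (f i)"
    and "\<And>j. j \<in> {1..n} \<Longrightarrow> in_U a b n W D (g j)"
    and "\<And>i j. i \<in> {1..n} \<Longrightarrow> j \<in> {1..n} \<Longrightarrow> g j a - (f i a + W / real n) \<ge> W"
    and "\<And>i j. i \<in> {1..n} \<Longrightarrow> j \<in> {1..n} \<Longrightarrow> f i b - (g j b + W / real n) \<ge> W"
  shows "measure lborel ((\<Union>i\<in>{1..n}. region a b n W (f i)) \<union> (\<Union>j\<in>{1..n}. region a b n W (g j)))
           \<le> 2 * W * (b - a) - W\<^sup>2 / D"
  using assms by (rule lemma6_main)

end
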